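(* Let $L$ be a positive integer, $S\ge 2$ an integer with $2^S\mid L$, and let $\{a_i(k)\}_{i\in\mathbb Z_L}$, $k\in\mathcal K=\mathbb Z_L$, be binary sequences (indexed by one period) satisfying: for every $s$ distinct keys $k_1,\ldots,k_S\in\mathcal K$ and all $b_1,\ldots,b_S\in\{0,1\}$, $$|A_{b_1\ldots b_S}(k_1,\ldots,k_S)|=L/2^S.$$ Let $0<\gamma<1$ with $\gamma L$ an integer, and let $2\le s\le S$. Let $r$ be the integer with $P_s(r)\le\gamma/2<P_s(r+1)$. Then for every set $T\subset\mathbb Z_L$ with $|T|=\gamma L$ and every guessing function $g:T\to\{0,1\}$, and for every $s$ distinct keys $k_1,\ldots,k_s\in\mathcal K$, $$\min_{1\le i\le s}\bigl|\{j\in T: g(j)=a_j(k_i)\}\bigr|\le n_{\rm correct}(\gamma):=L\Bigl\{P_{s-1}(r)+\frac{s-r-1}{s}\bigl(\gamma-2P_s(r)\bigr)\Bigr\}.$$ Equivalently, for every such $T$ and $g$, fewer than $s$ keys $k\in\mathcal K$ satisfy $|\{j\in T: g(j)=a_j(k)\}|>n_{\rm correct}(\gamma)$; in particular, if the key is uniformly distributed on $\mathcal K$, the number of correctly guessed bits does not exceed $n_{\rm correct}(\gamma)$ with probability at least $1-s/|\mathcal K|$.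
   Context: $\mathbb Z_L=\{0,\ldots,L-1\}$ is the residue ring modulo $L$. For distinct keys $k_1,\ldots,k_s$ and bits $b_1,\ldots,b_s$, $A_{b_1\ldots b_s}(k_1,\ldots,k_s)=\{i\in\mathbb Z_L: a_i(k_1)=b_1,\ldots,a_i(k_s)=b_s\}$. For integers $s\ge1$ and $t$, $P_s(t)=\Pr[X_s\le t]=2^{-s}\sum_{u=0}^{t}\binom{s}{u}$, where $X_s$ is binomial with $s$ trials and success probability $1/2$ (so $P_s(t)=0$ for $t<0$). *)

theory Defs
  imports Complex_Main
begin

text \<open>P_s(t) = Pr[X_s \<le> t] = 2^{-s} * sum_{u=0}^{t} (s choose u); equals 0 for t < 0.\<close>
definition Pbin :: "nat \<Rightarrow> int \<Rightarrow> real" where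
  "Pbin s t = (if t < 0 then 0 else (\<Sum>u\<le>nat t. real (s choose u)) / 2 ^ s)"

text \<open>A_{b_1..b_m}(k_1,..,k_m) for keys k 0..k (m-1), bits b 0..b (m-1);
  the sequences are a k i = a_i(k), with i ranging over Z_L = {0..<L}.\<close>
definition Aset :: "nat \<Rightarrow> (nat \<Rightarrow> nat \<Rightarrow> nat) \<Rightarrow> nat \<Rightarrow> (nat \<Rightarrow> nat) \<Rightarrow> (nat \<Rightarrow> nat) \<Rightarrow> nat set" where
  "Aset L a m k b = {i. i < L \<and> (\<forall>j<m. a (k j) i = b j)}"

definition ncorr :: "(nat \<Rightarrow> nat \<Rightarrow> nat) \<Rightarrow> nat set \<Rightarrow> (nat \<Rightarrow> nat) \<Rightarrow> nat \<Rightarrow> nat" where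
  "ncorr a T g k = card {j\<in>T. g j = a k j}"

end

theory Submission
  imports Defs
begin


lemma count_patterns:
  fixes L S s :: nat and a :: "nat \<Rightarrow> nat \<Rightarrow> nat"
  assumes L_pos: "L > 0"
    and S_dvd: "2 ^ S dvd L"
    and a_bin: "\<forall>k<L. \<forall>i<L. a k i \<in> {0, 1}"
    and balanced: "\<forall>k b. (\<forall>j<S. k j < L) \<longrightarrow> inj_on k {..<S} \<longrightarrow> (\<forall>j<S. b j \<in> {0, 1}) \<longrightarrow>
                    card (Aset L a S k b) = L div 2 ^ S"
    and sS: "s \<le> S"
    and kL: "\<forall>i<s. k i < L" and kinj: "inj_on k {..<s}"
    and A: "A \<subseteq> {..<s}"
  shows "card {j. j < L \<and> {i. i < s \<and> a (k i) j = 1} = A} = L div 2 ^ s"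
proof -
  have "2 ^ S \<le> L" using S_dvd L_pos by (simp add: dvd_imp_le)
  moreover have "S < 2 ^ S" by (rule less_exp)
  ultimately have SL: "S \<le> L" by linarith
  have cd: "card ({..<L} - k ` {..<s}) = L - s"
    using kL kinj by (subst card_Diff_subset) (auto simp: card_image)
  have "card {s..<S} \<le> card ({..<L} - k ` {..<s})" using cd SL by simp
  then obtain f where f: "f ` {s..<S} \<subseteq> {..<L} - k ` {..<s}" "inj_on f {s..<S}"
    using card_le_inj[of "{s..<S}" "{..<L} - k ` {..<s}"] by auto
  define k' where "k' i = (if i < s then k i else f i)" for i
  have k'L: "\<forall>j<S. k' j < L" using kL f(1) by (force simp: k'_def)
  have k'inj: "inj_on k' {..<S}"
  proof (rule inj_onI)
    fix x y assume x: "x \<in> {..<S}" and y: "y \<in> {..<S}" and e: "k' x = k' y"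
    show "x = y"
    proof (cases "x < s"; cases "y < s")
      assume "x < s" "y < s" thus ?thesis using e kinj by (auto simp: k'_def inj_on_def)
    next
      assume h: "x < s" "\<not> y < s"
      hence "f y \<in> f ` {s..<S}" using y by auto
      hence "f y \<notin> k ` {..<s}" using f(1) by blast
      moreover have "k x \<in> k ` {..<s}" using h by auto
      moreover have "k x = f y" using e h by (simp add: k'_def)
      ultimately show ?thesis by simp
    next
      assume h: "\<not> x < s" "y < s"
      hence "f x \<in> f ` {s..<S}" using x by auto
      hence "f x \<notin> k ` {..<s}" using f(1) by blast
      moreover have "k y \<in> k ` {..<s}" using h by auto
      moreover have "k y = f x" using e h by (simp add: k'_def)
      ultimately show ?thesis by simp
    next
      assume "\<not> x < s" "\<not> y < s" thus ?thesis using e f(2) x y by (auto simp: k'_def inj_on_def)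
    qed
  qed
  define P' where "P' j = {i. i < S \<and> a (k' i) j = 1}" for j
  have C: "card {j. j < L \<and> P' j = C} = L div 2 ^ S" if C: "C \<subseteq> {..<S}" for C
  proof -
    define b where "b i = (if i \<in> C then 1 else 0::nat)" for i
    have "Aset L a S k' b = {j. j < L \<and> P' j = C}"
    proof (rule set_eqI, rule iffI)
      fix j assume "j \<in> Aset L a S k' b"
      thus "j \<in> {j. j < L \<and> P' j = C}" using C by (auto simp: Aset_def P'_def b_def split: if_splits)
    next
      fix j assume j: "j \<in> {j. j < L \<and> P' j = C}"
      have "a (k' i) j = b i" if "i < S" for i
      proof -
        have "a (k' i) j \<in> {0,1}" using a_bin k'L that j by auto
        thus ?thesis using j that by (auto simp: P'_def b_def)
      qed
      thus "j \<in> Aset L a S k' b" using j by (auto simp: Aset_def)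
    qed
    moreover have "\<forall>j<S. b j \<in> {0, 1}" by (simp add: b_def)
    ultimately show ?thesis using spec[OF spec[OF balanced, of k'], of b] k'L k'inj by simp
  qed
  have eq: "{j. j < L \<and> {i. i < s \<and> a (k i) j = 1} = A}
      = (\<Union>B\<in>Pow {s..<S}. {j. j < L \<and> P' j = A \<union> B})"
  proof -
    have P: "{i. i < s \<and> a (k i) j = 1} = P' j \<inter> {..<s}" for j
      using sS by (auto simp: P'_def k'_def)
    have "P' j = (P' j \<inter> {..<s}) \<union> (P' j \<inter> {s..<S})" for j by (auto simp: P'_def)
    moreover have "(A \<union> B) \<inter> {..<s} = A" if "B \<in> Pow {s..<S}" for B using A that by auto
    ultimately show ?thesis unfolding P
    proof (intro set_eqI iffI)
      fix j assume "j \<in> {j. j < L \<and> P' j \<inter> {..<s} = A}"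
      hence j: "j < L" "P' j \<inter> {..<s} = A" by auto
      have "P' j \<inter> {s..<S} \<in> Pow {s..<S}" by auto
      moreover have "P' j = A \<union> (P' j \<inter> {s..<S})" using j by (auto simp: P'_def)
      ultimately show "j \<in> (\<Union>B\<in>Pow {s..<S}. {j. j < L \<and> P' j = A \<union> B})" using j by blast
    next
      fix j assume "j \<in> (\<Union>B\<in>Pow {s..<S}. {j. j < L \<and> P' j = A \<union> B})"
      then obtain B where B: "B \<in> Pow {s..<S}" "j < L" "P' j = A \<union> B" by auto
      have "(A \<union> B) \<inter> {..<s} = A" using A B(1) by auto
      thus "j \<in> {j. j < L \<and> P' j \<inter> {..<s} = A}" using B by simp
    qed
  qed
  have "card (\<Union>B\<in>Pow {s..<S}. {j. j < L \<and> P' j = A \<union> B})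
     = (\<Sum>B\<in>Pow {s..<S}. card {j. j < L \<and> P' j = A \<union> B})"
  proof (rule card_UN_disjoint)
    show "\<forall>i\<in>Pow {s..<S}. \<forall>j\<in>Pow {s..<S}. i \<noteq> j \<longrightarrow>
        {j. j < L \<and> P' j = A \<union> i} \<inter> {ja. ja < L \<and> P' ja = A \<union> j} = {}"
    proof (intro ballI impI)
      fix B1 B2 assume B: "B1 \<in> Pow {s..<S}" "B2 \<in> Pow {s..<S}" "B1 \<noteq> B2"
      have "A \<union> B1 \<noteq> A \<union> B2"
      proof
        assume "A \<union> B1 = A \<union> B2"
        hence "(A \<union> B1) \<inter> {s..<S} = (A \<union> B2) \<inter> {s..<S}" by simp
        moreover have "(A \<union> B1) \<inter> {s..<S} = B1" "(A \<union> B2) \<inter> {s..<S} = B2" using A B by auto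
        ultimately show False using B by simp
      qed
      thus "{j. j < L \<and> P' j = A \<union> B1} \<inter> {ja. ja < L \<and> P' ja = A \<union> B2} = {}" by auto
    qed
  qed auto
  also have "\<dots> = (\<Sum>B\<in>Pow {s..<S}. L div 2 ^ S)"
    by (rule sum.cong) (use A sS in \<open>auto intro!: C\<close>)
  also have "\<dots> = 2 ^ (S - s) * (L div 2 ^ S)" by (simp add: card_Pow)
  also have "\<dots> = L div 2 ^ s"
  proof -
    obtain q where q: "L = 2 ^ S * q" using S_dvd by blast
    have "(2::nat) ^ S = 2 ^ s * 2 ^ (S - s)" using sS by (simp add: power_add[symmetric])
    thus ?thesis using q by simp
  qed
  finally show ?thesis using eq by simp
qed



lemma sum_subsets_card:
  fixes h :: "nat \<Rightarrow> real"
  shows "(\<Sum>A\<in>Pow {..<s}. h (card A)) = (\<Sum>u\<le>s. real (s choose u) * h u)"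
proof -
  have "(\<Sum>A\<in>Pow {..<s}. h (card A)) = (\<Sum>u\<le>s. \<Sum>A\<in>{A. A \<in> Pow {..<s} \<and> card A = u}. h (card A))"
    by (rule sum.group[symmetric]) (auto simp: card_mono[of "{..<s}", simplified])
  also have "\<dots> = (\<Sum>u\<le>s. real (s choose u) * h u)"
  proof (rule sum.cong[OF refl])
    fix u assume "u \<in> {..s}"
    have "{A. A \<in> Pow {..<s} \<and> card A = u} = {A. A \<subseteq> {..<s} \<and> card A = u}" by auto
    hence "card {A. A \<in> Pow {..<s} \<and> card A = u} = s choose u" using n_subsets[of "{..<s}" u] by simp
    moreover have "(\<Sum>A\<in>{A. A \<in> Pow {..<s} \<and> card A = u}. h (card A)) = (\<Sum>A\<in>{A. A \<in> Pow {..<s} \<and> card A = u}. h u)"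
      by (rule sum.cong) auto
    ultimately show "(\<Sum>A\<in>{A. A \<in> Pow {..<s} \<and> card A = u}. h (card A)) = real (s choose u) * h u"
      by simp
  qed
  finally show ?thesis .
qed

lemma sum_patterns:
  fixes L S s :: nat and a :: "nat \<Rightarrow> nat \<Rightarrow> nat" and h :: "nat \<Rightarrow> real"
  assumes L_pos: "L > 0"
    and S_dvd: "2 ^ S dvd L"
    and a_bin: "\<forall>k<L. \<forall>i<L. a k i \<in> {0, 1}"
    and balanced: "\<forall>k b. (\<forall>j<S. k j < L) \<longrightarrow> inj_on k {..<S} \<longrightarrow> (\<forall>j<S. b j \<in> {0, 1}) \<longrightarrow>
                    card (Aset L a S k b) = L div 2 ^ S"
    and sS: "s \<le> S"
    and kL: "\<forall>i<s. k i < L" and kinj: "inj_on k {..<s}"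
  shows "(\<Sum>j<L. h (card {i. i < s \<and> a (k i) j = 1}))
        = real L / 2 ^ s * (\<Sum>u\<le>s. real (s choose u) * h u)"
proof -
  let ?P = "\<lambda>j. {i. i < s \<and> a (k i) j = 1}"
  have "(\<Sum>j<L. h (card (?P j))) = (\<Sum>A\<in>Pow {..<s}. \<Sum>j\<in>{j. j \<in> {..<L} \<and> ?P j = A}. h (card (?P j)))"
    by (rule sum.group[symmetric]) auto
  also have "\<dots> = (\<Sum>A\<in>Pow {..<s}. real (L div 2 ^ s) * h (card A))"
  proof (rule sum.cong[OF refl])
    fix A assume A: "A \<in> Pow {..<s}"
    have "(\<Sum>j\<in>{j. j \<in> {..<L} \<and> ?P j = A}. h (card (?P j))) = (\<Sum>j\<in>{j. j \<in> {..<L} \<and> ?P j = A}. h (card A))"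
      by (rule sum.cong) auto
    also have "\<dots> = real (card {j. j < L \<and> ?P j = A}) * h (card A)" by simp
    also have "card {j. j < L \<and> ?P j = A} = L div 2 ^ s"
      using count_patterns[OF L_pos S_dvd a_bin balanced sS kL kinj, of A] A by auto
    finally show "(\<Sum>j\<in>{j. j \<in> {..<L} \<and> ?P j = A}. h (card (?P j))) = real (L div 2 ^ s) * h (card A)" .
  qed
  also have "\<dots> = real (L div 2 ^ s) * (\<Sum>A\<in>Pow {..<s}. h (card A))" by (simp add: sum_distrib_left)
  also have "real (L div 2 ^ s) = real L / 2 ^ s"
  proof -
    have "(2::nat) ^ s dvd 2 ^ S" using sS by (simp add: le_imp_power_dvd)
    hence "(2::nat) ^ s dvd L" using S_dvd by (rule dvd_trans)
    thus ?thesis by (simp add: real_of_nat_div)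
  qed
  finally show ?thesis by (simp add: sum_subsets_card)
qed



lemma Pbin_ge1:
  assumes "r \<ge> int s"
  shows "Pbin s r \<ge> 1"
proof -
  have "(\<Sum>u\<le>s. real (s choose u)) \<le> (\<Sum>u\<le>nat r. real (s choose u))"
    by (rule sum_mono2) (use assms in auto)
  moreover have "(\<Sum>u\<le>s. real (s choose u)) = 2 ^ s"
    using choose_row_sum[of s] by (metis of_nat_numeral of_nat_power of_nat_sum)
  ultimately show ?thesis using assms by (simp add: Pbin_def)
qed

lemma comb_identity:
  assumes s1: "s \<ge> 1" and rs: "r < int s"
  shows "(\<Sum>u\<le>s. real (s choose u) * (max 0 (real_of_int r + 1 - real u) + max 0 (real u - (real s - real_of_int r - 1))))
    = 2 ^ s * (real s * Pbin (s - 1) r - 2 * (real s - real_of_int r - 1) * Pbin s r)"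
proof (cases "r < 0")
  case True
  have "(\<Sum>u\<le>s. real (s choose u) * (max 0 (real_of_int r + 1 - real u) + max 0 (real u - (real s - real_of_int r - 1)))) = 0"
    by (rule sum.neutral) (use True in auto)
  thus ?thesis using True by (simp add: Pbin_def)
next
  case False
  define t where "t = nat r"
  have r: "r = int t" using False by (simp add: t_def)
  have ts: "t < s" using rs r by simp
  define f where "f u = real (s choose u) * max 0 (real t + 1 - real u)" for u
  have 1: "(\<Sum>u\<le>s. real (s choose u) * max 0 (real u - (real s - real t - 1))) = (\<Sum>u\<le>s. f u)"
  proof -
    have "(\<Sum>u\<le>s. real (s choose u) * max 0 (real u - (real s - real t - 1)))
        = (\<Sum>u=0..s. real (s choose u) * max 0 (real u - (real s - real t - 1)))"
      by (simp add: atLeast0AtMost)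
    also have "\<dots> = (\<Sum>u=0..s. real (s choose (s - u)) * max 0 (real (s - u) - (real s - real t - 1)))"
      by (subst sum.atLeastAtMost_rev) simp
    also have "\<dots> = (\<Sum>u=0..s. f u)"
    proof (rule sum.cong[OF refl])
      fix u assume u: "u \<in> {0..s}"
      hence "s choose u = s choose (s - u)" by (intro binomial_symmetric) simp
      hence "s choose (s - u) = s choose u" by (rule sym)
      moreover have "real (s - u) - (real s - real t - 1) = real t + 1 - real u" using u by (simp add: of_nat_diff)
      ultimately show "real (s choose (s - u)) * max 0 (real (s - u) - (real s - real t - 1)) = f u"
        by (simp add: f_def)
    qed
    finally show ?thesis by (simp add: atLeast0AtMost)
  qed
  have 2: "(\<Sum>u\<le>s. f u) = (\<Sum>u\<le>t. real (s choose u) * (real t + 1 - real u))"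
    by (rule sum.mono_neutral_cong_right) (use ts in \<open>auto simp: f_def\<close>)
  have 3: "real s * real ((s - 1) choose u) = (real s - real u) * real (s choose u)" if "u \<le> t" for u
  proof -
    have "real ((s - u) * (s choose u)) = real (s * ((s - 1) choose u))" by (simp only: binomial_absorb_comp)
    thus ?thesis using that ts by (simp add: of_nat_diff)
  qed
  have P1: "Pbin (s - 1) r = (\<Sum>u\<le>t. real ((s - 1) choose u)) / 2 ^ (s - 1)" using r by (simp add: Pbin_def)
  have P2: "Pbin s r = (\<Sum>u\<le>t. real (s choose u)) / 2 ^ s" using r by (simp add: Pbin_def)
  have pw: "(2::real) ^ s = 2 * 2 ^ (s - 1)" using s1 by (cases s) auto
  have "2 ^ s * (real s * Pbin (s - 1) r - 2 * (real s - real_of_int r - 1) * Pbin s r)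
     = 2 * (\<Sum>u\<le>t. real s * real ((s - 1) choose u)) - 2 * (\<Sum>u\<le>t. (real s - real t - 1) * real (s choose u))"
  proof -
    have a: "2 ^ s * (real s * Pbin (s - 1) r) = 2 * (\<Sum>u\<le>t. real s * real ((s - 1) choose u))"
    proof -
      have "2 ^ s * (real s * Pbin (s - 1) r) = 2 * (real s * (\<Sum>u\<le>t. real ((s - 1) choose u)))"
        unfolding P1 pw by simp
      thus ?thesis by (simp add: sum_distrib_left)
    qed
    have b: "2 ^ s * (2 * (real s - real_of_int r - 1) * Pbin s r) = 2 * (\<Sum>u\<le>t. (real s - real t - 1) * real (s choose u))"
    proof -
      have "2 ^ s * (2 * (real s - real_of_int r - 1) * Pbin s r) = 2 * ((real s - real t - 1) * (\<Sum>u\<le>t. real (s choose u)))"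
        unfolding P2 using r by simp
      thus ?thesis by (simp add: sum_distrib_left)
    qed
    show ?thesis using a b by (simp add: right_diff_distrib)
  qed
  also have "\<dots> = 2 * (\<Sum>u\<le>t. real (s choose u) * (real t + 1 - real u))"
  proof -
    have "(\<Sum>u\<le>t. real s * real ((s - 1) choose u)) - (\<Sum>u\<le>t. (real s - real t - 1) * real (s choose u))
        = (\<Sum>u\<le>t. real s * real ((s - 1) choose u) - (real s - real t - 1) * real (s choose u))"
      by (simp add: sum_subtractf)
    also have "\<dots> = (\<Sum>u\<le>t. real (s choose u) * (real t + 1 - real u))"
    proof (rule sum.cong[OF refl])
      fix u assume "u \<in> {..t}"
      hence "real s * real ((s - 1) choose u) = (real s - real u) * real (s choose u)" using 3 by simp
      thus "real s * real ((s - 1) choose u) - (real s - real t - 1) * real (s choose u) = real (s choose u) * (real t + 1 - real u)"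
        by (simp add: algebra_simps)
    qed
    finally show ?thesis by simp
  qed
  finally show ?thesis using 1 2 r by (simp add: sum.distrib distrib_left f_def)
qed



lemma card_filter_sum: "finite A \<Longrightarrow> card {x\<in>A. Q x} = (\<Sum>x\<in>A. if Q x then 1 else 0::nat)"
  apply (subst sum.inter_filter[symmetric]) apply assumption by simp

lemma main_bound:
  fixes L S s :: nat and a :: "nat \<Rightarrow> nat \<Rightarrow> nat" and \<gamma> :: real and r :: int
  assumes L_pos: "L > 0"
    and S_dvd: "2 ^ S dvd L"
    and a_bin: "\<forall>k<L. \<forall>i<L. a k i \<in> {0, 1}"
    and balanced: "\<forall>k b. (\<forall>j<S. k j < L) \<longrightarrow> inj_on k {..<S} \<longrightarrow> (\<forall>j<S. b j \<in> {0, 1}) \<longrightarrow>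
                    card (Aset L a S k b) = L div 2 ^ S"
    and gamma: "0 < \<gamma>" "\<gamma> < 1"
    and s_range: "2 \<le> s" "s \<le> S"
    and r_def: "Pbin s r \<le> \<gamma> / 2"
    and T: "T \<subseteq> {..<L}" "real (card T) = \<gamma> * real L" "\<forall>j\<in>T. g j \<in> {0, 1}"
    and kL: "\<forall>i<s. k i < L" and kinj: "inj_on k {..<s}"
  shows "real (MIN i\<in>{..<s}. ncorr a T g (k i))
                \<le> real L * (Pbin (s - 1) r + (real s - real_of_int r - 1) / real s * (\<gamma> - 2 * Pbin s r))"
proof -
  define c where "c = real s - real_of_int r - 1"
  define P where "P j = {i. i < s \<and> a (k i) j = 1}" for j
  define h where "h w = max 0 (real_of_int r + 1 - real w) + max 0 (real w - c)" for w :: nat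
  have rs: "r < int s"
  proof (rule ccontr)
    assume "\<not> r < int s"
    hence "Pbin s r \<ge> 1" by (intro Pbin_ge1) simp
    thus False using r_def gamma by simp
  qed
  have finT: "finite T" using T(1) finite_subset by blast
  have h0: "h w \<ge> 0" for w by (simp add: h_def)
  have swap: "(\<Sum>i<s. ncorr a T g (k i)) = (\<Sum>j\<in>T. card {i\<in>{..<s}. g j = a (k i) j})"
  proof -
    have "(\<Sum>i<s. ncorr a T g (k i)) = (\<Sum>i<s. \<Sum>j\<in>T. if g j = a (k i) j then 1 else 0)"
      unfolding ncorr_def using card_filter_sum[OF finT] by simp
    also have "\<dots> = (\<Sum>j\<in>T. \<Sum>i<s. if g j = a (k i) j then 1 else 0)" by (rule sum.swap)
    also have "\<dots> = (\<Sum>j\<in>T. card {i\<in>{..<s}. g j = a (k i) j})"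
      using card_filter_sum[OF finite_lessThan[of s]] by presburger
    finally show ?thesis .
  qed
  have pt: "real (card {i\<in>{..<s}. g j = a (k i) j}) \<le> c + h (card (P j))" if j: "j \<in> T" for j
  proof -
    have jL: "j < L" using j T(1) by auto
    have Ps: "P j \<subseteq> {..<s}" by (auto simp: P_def)
    hence w: "card (P j) \<le> s" using card_mono[of "{..<s}"] by fastforce
    have bin: "a (k i) j \<in> {0,1}" if "i < s" for i using a_bin kL that jL by auto
    have "card {i\<in>{..<s}. g j = a (k i) j} \<le> max (card (P j)) (s - card (P j))"
    proof (cases "g j = 1")
      case True
      hence "{i\<in>{..<s}. g j = a (k i) j} = P j" by (auto simp: P_def)
      thus ?thesis by simp
    next
      case False
      hence g0: "g j = 0" using T(3) j by auto
      have "{i\<in>{..<s}. g j = a (k i) j} = {..<s} - P j" using bin g0 by (auto simp: P_def)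
      hence "card {i\<in>{..<s}. g j = a (k i) j} = s - card (P j)" using Ps finite_subset[OF Ps] by (simp add: card_Diff_subset)
      thus ?thesis by simp
    qed
    hence "real (card {i\<in>{..<s}. g j = a (k i) j}) \<le> max (real (card (P j))) (real s - real (card (P j)))"
      using w by (simp add: of_nat_diff)
    also have "\<dots> \<le> c + h (card (P j))" by (auto simp: h_def c_def)
    finally show ?thesis .
  qed
  have fin_img: "finite ((\<lambda>i. ncorr a T g (k i)) ` {..<s})" by simp
  have "real s * real (MIN i\<in>{..<s}. ncorr a T g (k i)) \<le> (\<Sum>i<s. real (ncorr a T g (k i)))"
    using sum_bounded_below[of "{..<s}" "real (MIN i\<in>{..<s}. ncorr a T g (k i))" "\<lambda>i. real (ncorr a T g (k i))"]
    by (simp add: Min_le)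
  also have "\<dots> = real (\<Sum>j\<in>T. card {i\<in>{..<s}. g j = a (k i) j})" by (simp only: of_nat_sum[symmetric] swap)
  also have "\<dots> \<le> (\<Sum>j\<in>T. c + h (card (P j)))" by (simp only: of_nat_sum) (rule sum_mono[OF pt])
  also have "\<dots> = real (card T) * c + (\<Sum>j\<in>T. h (card (P j)))" by (simp add: sum.distrib)
  also have "\<dots> \<le> real (card T) * c + (\<Sum>j\<in>{..<L}. h (card (P j)))"
    using sum_mono2[of "{..<L}" T "\<lambda>j. h (card (P j))"] T(1) h0 by simp
  also have "(\<Sum>j\<in>{..<L}. h (card (P j))) = real L / 2 ^ s * (\<Sum>u\<le>s. real (s choose u) * h u)"
    unfolding P_def by (rule sum_patterns[OF L_pos S_dvd a_bin balanced s_range(2) kL kinj])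
  also have "(\<Sum>u\<le>s. real (s choose u) * h u) = 2 ^ s * (real s * Pbin (s - 1) r - 2 * c * Pbin s r)"
    unfolding h_def c_def by (rule comb_identity) (use s_range rs in auto)
  finally have "real s * real (MIN i\<in>{..<s}. ncorr a T g (k i))
      \<le> \<gamma> * real L * c + real L * (real s * Pbin (s - 1) r - 2 * c * Pbin s r)"
    using T(2) by simp
  also have "\<dots> = real s * (real L * (Pbin (s - 1) r + c / real s * (\<gamma> - 2 * Pbin s r)))"
    using s_range by (simp add: field_simps)
  finally show ?thesis using s_range unfolding c_def by simp
qed

theorem theorem1:
  fixes L S s :: nat and a :: "nat \<Rightarrow> nat \<Rightarrow> nat" and \<gamma> :: real and r :: int
  assumes L_pos: "L > 0"
    and S_ge: "S \<ge> 2"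
    and S_dvd: "2 ^ S dvd L"
    and a_bin: "\<forall>k<L. \<forall>i<L. a k i \<in> {0, 1}"
    and balanced: "\<forall>k b. (\<forall>j<S. k j < L) \<longrightarrow> inj_on k {..<S} \<longrightarrow> (\<forall>j<S. b j \<in> {0, 1}) \<longrightarrow>
                    card (Aset L a S k b) = L div 2 ^ S"
    and gamma: "0 < \<gamma>" "\<gamma> < 1"
    and gammaL_int: "\<gamma> * real L \<in> \<int>"
    and s_range: "2 \<le> s" "s \<le> S"
    and r_def: "Pbin s r \<le> \<gamma> / 2" "\<gamma> / 2 < Pbin s (r + 1)"
  shows "\<forall>T g. T \<subseteq> {..<L} \<longrightarrow> real (card T) = \<gamma> * real L \<longrightarrow> (\<forall>j\<in>T. g j \<in> {0, 1}) \<longrightarrow>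
           (\<forall>k. (\<forall>i<s. k i < L) \<longrightarrow> inj_on k {..<s} \<longrightarrow>
              real (MIN i\<in>{..<s}. ncorr a T g (k i))
                \<le> real L * (Pbin (s - 1) r + (real s - real_of_int r - 1) / real s * (\<gamma> - 2 * Pbin s r)))
           \<and> card {k. k < L \<and> real (ncorr a T g k)
                > real L * (Pbin (s - 1) r + (real s - real_of_int r - 1) / real s * (\<gamma> - 2 * Pbin s r))} < s"
  proof (intro allI impI)
  fix T :: "nat set" and g :: "nat \<Rightarrow> nat" assume T: "T \<subseteq> {..<L}" "real (card T) = \<gamma> * real L" "\<forall>j\<in>T. g j \<in> {0, 1}"
  define n where "n = real L * (Pbin (s - 1) r + (real s - real_of_int r - 1) / real s * (\<gamma> - 2 * Pbin s r))"
  have part1: "\<forall>k. (\<forall>i<s. k i < L) \<longrightarrow> inj_on k {..<s} \<longrightarrow> real (MIN i\<in>{..<s}. ncorr a T g (k i)) \<le> n"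
    unfolding n_def using main_bound[OF L_pos S_dvd a_bin balanced gamma s_range r_def(1) T] by blast
  have part2: "card {k. k < L \<and> real (ncorr a T g k) > n} < s"
  proof (rule ccontr)
    let ?K = "{k. k < L \<and> real (ncorr a T g k) > n}"
    assume "\<not> card ?K < s"
    hence "s \<le> card ?K" by simp
    then obtain K where K: "K \<subseteq> ?K" "card K = s" "finite K" by (rule obtain_subset_with_card_n)
    obtain e where e: "bij_betw e {0..<s} K" using ex_bij_betw_nat_finite[OF K(3)] K(2) by auto
    have eK: "e i \<in> ?K" if "i < s" for i using bij_betw_apply[OF e] that K(1) by auto
    have ek: "\<forall>i<s. e i < L" using eK by auto
    have ei: "inj_on e {..<s}" using e by (simp add: bij_betw_def lessThan_atLeast0)
    have le: "real (MIN i\<in>{..<s}. ncorr a T g (e i)) \<le> n" using part1 ek ei by blast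
    have "(MIN i\<in>{..<s}. ncorr a T g (e i)) \<in> (\<lambda>i. ncorr a T g (e i)) ` {..<s}"
    proof (rule Min_in)
      have "0 \<in> {..<s}" using s_range by simp
      thus "(\<lambda>i. ncorr a T g (e i)) ` {..<s} \<noteq> {}" by blast
    qed simp
    then obtain i where i: "i < s" "(MIN i\<in>{..<s}. ncorr a T g (e i)) = ncorr a T g (e i)" by auto
    show False using le i eK[OF i(1)] by simp
  qed
  show "(\<forall>k. (\<forall>i<s. k i < L) \<longrightarrow> inj_on k {..<s} \<longrightarrow>
              real (MIN i\<in>{..<s}. ncorr a T g (k i))
                \<le> real L * (Pbin (s - 1) r + (real s - real_of_int r - 1) / real s * (\<gamma> - 2 * Pbin s r)))
           \<and> card {k. k < L \<and> real (ncorr a T g k)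
                > real L * (Pbin (s - 1) r + (real s - real_of_int r - 1) / real s * (\<gamma> - 2 * Pbin s r))} < s"
    using part1 part2 unfolding n_def by blast
qed

end
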